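(* Let $d(z)=\sum_{k\ge 0} d_k z^{-k-1}$ be a (formal) Laurent series, and let $P(z)=\sum_{\alpha=0}^{m} c_{\alpha,1}z^\alpha$ and $Q(z)=\sum_{\alpha} c_{\alpha,0}z^\alpha$ be complex polynomials with $c_{m,1}\neq 0$ and $\deg Q<\deg P=m$, where $m\ge 1$. Let $h(z)=Q(z)/P(z)$, expanded as a Laurent series at $z=\infty$ in powers of $z^{-1}$. Define, for $(x,y)\in\mathbb Z_+^2$, $$\varphi(x,y):=\operatorname{Res}\Big\{d(\xi)\Big(\tfrac{Q(\xi)}{P(\xi)}\Big)^y\xi^x\Big\}.$$ Then a double sequence $\{r(x,y)\}_{(x,y)\in\mathbb Z_+^2}$ of complex numbers is the rational Riordan array associated with the pair $d(z)$, $h(z)=Q(z)/P(z)$ if and only if it is a solution of the following Cauchy problem: (i) for all $x\ge 0$, $y\ge 0$: $$\sum_{\alpha=0}^{m} c_{\alpha,1}\, r(x+\alpha,y+1)-\sum_{\alpha=0}^{m} c_{\alpha,0}\, r(x+\alpha,y)=0$$ (equivalently $[P(\delta_1)\delta_2-Q(\delta_1)]r(x,y)=0$, where $\delta_1 r(x,y)=r(x+1,y)$, $\delta_2 r(x,y)=r(x,y+1)$), with $c_{\alpha,0}:=0$ for $\alpha>\deg Q$; (ii) $r(x,y)=\varphi(x,y)$ for all $(x,y)\in\mathbb Z_+^2$ with $(x,y)\not\geqslant(m,1)$, i.e. with $x<m$ or $y=0$.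
   Context: $\mathbb Z_+$ denotes the nonnegative integers. For a formal Laurent series in a variable $\xi$, $\operatorname{Res}$ denotes the coefficient of $\xi^{-1}$. Given formal Laurent series $d(z)=\sum_{k\ge0}d_kz^{-k-1}$ and $h(z)=\sum_{k\ge0}h_kz^{-k-1}$, the Riordan array associated with the pair $d,h$ is the double sequence $\{r(x,y)\}_{(x,y)\in\mathbb Z_+^2}$ whose generating function $\mathcal D(z,w)=\sum_{(x,y)\in\mathbb Z_+^2} r(x,y)z^{-x-1}w^{-y-1}$ equals $\frac{d(z)}{w-h(z)}:=\sum_{y\ge0} d(z)h(z)^y w^{-y-1}$; equivalently $r(x,y)=\operatorname{Res}\{d(z)h(z)^yz^x\}$. It is called rational if $h(z)$ is the expansion at $z=\infty$ of a rational function $Q(z)/P(z)$ with $P,Q$ as in the statement. For $(x,y),(a,b)\in\mathbb Z_+^2$, $(x,y)\geqslant(a,b)$ means $x\ge a$ and $y\ge b$. *)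

theory Defs
  imports "HOL-Computational_Algebra.Computational_Algebra"
begin

(* Formal Laurent series "at z = infinity" (in powers of z^{-1}) are represented as
   library formal Laurent series (type complex fls) in the variable t = z^{-1}.
   Thus z^k corresponds to fls_X_intpow (-k), and the coefficient of z^{-1}
   is the coefficient of t^1. *)

definition zpow :: "int \<Rightarrow> complex fls" where
  "zpow k = fls_X_intpow (- k)"

definition Res_inf :: "complex fls \<Rightarrow> complex" where
  "Res_inf f = fls_nth f 1"

(* the Laurent series sum_{k>=0} a_k z^{-k-1} *)
definition lser :: "(nat \<Rightarrow> complex) \<Rightarrow> complex fls" where
  "lser a = Abs_fls (\<lambda>n. if n \<ge> 1 then a (nat (n - 1)) else 0)"

definition poly_inf :: "complex poly \<Rightarrow> complex fls" where
  "poly_inf p = (\<Sum>\<alpha>\<le>degree p. fls_const (coeff p \<alpha>) * zpow (int \<alpha>))"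

definition rat_inf :: "complex poly \<Rightarrow> complex poly \<Rightarrow> complex fls" where
  "rat_inf Q P = poly_inf Q / poly_inf P"

definition riordan_array :: "complex fls \<Rightarrow> complex fls \<Rightarrow> nat \<Rightarrow> nat \<Rightarrow> complex" where
  "riordan_array d h x y = Res_inf (d * h ^ y * zpow (int x))"

end

theory Submission
  imports Defs
begin

lemma zpow_add: "zpow (a + b) = zpow a * zpow b"
  unfolding zpow_def using fls_X_intpow_times_fls_X_intpow[of "-a" "-b", where 'a=complex]
  by simp

lemma Res_const: "Res_inf (fls_const c * f) = c * Res_inf f"
  unfolding Res_inf_def by simp

lemma zpow_nth: "fls_nth (zpow (int k)) n = (if n = - int k then 1 else 0)"
  unfolding zpow_def by simp

lemma poly_inf_le:
  assumes "degree p \<le> n"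
  shows "poly_inf p = (\<Sum>\<alpha>\<le>n. fls_const (coeff p \<alpha>) * zpow (int \<alpha>))"
  unfolding poly_inf_def
proof (rule sum.mono_neutral_left)
  show "\<forall>i\<in>{..n} - {..degree p}. fls_const (coeff p i) * zpow (int i) = 0"
    by (auto simp: coeff_eq_0)
qed (use assms in auto)

lemma poly_inf_nth: "fls_nth (poly_inf p) (- int k) = coeff p k"
proof -
  have "poly_inf p = (\<Sum>\<alpha>\<le>max k (degree p). fls_const (coeff p \<alpha>) * zpow (int \<alpha>))"
    by (rule poly_inf_le) simp
  also have "fls_nth \<dots> (- int k) = (\<Sum>\<alpha>\<le>max k (degree p). coeff p \<alpha> * (if k = \<alpha> then 1 else 0))"
    by (simp add: fls_nth_sum zpow_nth)
  also have "\<dots> = coeff p k" by (simp add: if_distrib sum.delta cong: if_cong)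
  finally show ?thesis .
qed

lemma poly_inf_nz: "p \<noteq> 0 \<Longrightarrow> poly_inf p \<noteq> 0"
  using poly_inf_nth[of p "degree p"] by auto

lemma key:
  assumes "degree p \<le> m"
  shows "(\<Sum>\<alpha>\<le>m. coeff p \<alpha> * Res_inf (A * zpow (int (x+\<alpha>))))
        = Res_inf (A * zpow (int x) * poly_inf p)"
proof -
  have "Res_inf (A * zpow (int x) * poly_inf p)
     = Res_inf (\<Sum>\<alpha>\<le>m. fls_const (coeff p \<alpha>) * (A * zpow (int (x+\<alpha>))))"
    by (simp add: poly_inf_le[OF assms] sum_distrib_left zpow_add mult_ac)
  also have "\<dots> = (\<Sum>\<alpha>\<le>m. coeff p \<alpha> * Res_inf (A * zpow (int (x+\<alpha>))))"
    unfolding Res_inf_def fls_nth_sum using Res_const unfolding Res_inf_def by simp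
  finally show ?thesis by simp
qed

lemma split_top: "(\<Sum>\<alpha>\<le>(m::nat). f \<alpha>) = (\<Sum>\<alpha><m. f \<alpha>) + (f m :: complex)"
  by (simp add: lessThan_Suc_atMost[symmetric])

theorem theorem1:
  fixes d :: "nat \<Rightarrow> complex" and P Q :: "complex poly" and m :: nat
    and r :: "nat \<Rightarrow> nat \<Rightarrow> complex"
  assumes "m \<ge> 1" and "degree P = m" and "coeff P m \<noteq> 0" and "degree Q < degree P"
  defines "\<phi> \<equiv> (\<lambda>x y. Res_inf (lser d * (rat_inf Q P) ^ y * zpow (int x)))"
  shows "(\<forall>x y. r x y = riordan_array (lser d) (rat_inf Q P) x y) \<longleftrightarrow>
         ((\<forall>x y. (\<Sum>\<alpha>\<le>m. coeff P \<alpha> * r (x + \<alpha>) (y + 1))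
                   - (\<Sum>\<alpha>\<le>m. coeff Q \<alpha> * r (x + \<alpha>) y) = 0)
          \<and> (\<forall>x y. (x < m \<or> y = 0) \<longrightarrow> r x y = \<phi> x y))"
proof -
  define R where "R = riordan_array (lser d) (rat_inf Q P)"
  define h where "h = rat_inf Q P"
  have Pnz: "P \<noteq> 0" using assms(3) by auto
  have hP: "h * poly_inf P = poly_inf Q"
    unfolding h_def rat_inf_def using poly_inf_nz[OF Pnz] by simp
  have phiR: "\<phi> = R" unfolding \<phi>_def R_def riordan_array_def by (intro ext) simp
  have rec: "(\<Sum>\<alpha>\<le>m. coeff P \<alpha> * R (x + \<alpha>) (y + 1)) = (\<Sum>\<alpha>\<le>m. coeff Q \<alpha> * R (x + \<alpha>) y)"
    for x y
  proof -
    have "(\<Sum>\<alpha>\<le>m. coeff P \<alpha> * R (x + \<alpha>) (y + 1))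
        = Res_inf (lser d * h ^ (y+1) * zpow (int x) * poly_inf P)"
      unfolding R_def riordan_array_def h_def[symmetric]
      by (rule key) (simp add: assms(2))
    also have "\<dots> = Res_inf (lser d * h ^ y * zpow (int x) * poly_inf Q)"
      by (simp add: hP[symmetric] mult_ac)
    also have "\<dots> = (\<Sum>\<alpha>\<le>m. coeff Q \<alpha> * R (x + \<alpha>) y)"
      unfolding R_def riordan_array_def h_def[symmetric]
      by (rule key[symmetric]) (use assms in simp)
    finally show ?thesis .
  qed
  show ?thesis
    unfolding R_def[symmetric] phiR
  proof
    assume "\<forall>x y. r x y = R x y"
    then have "r = R" by (intro ext) simp
    then show "(\<forall>x y. (\<Sum>\<alpha>\<le>m. coeff P \<alpha> * r (x + \<alpha>) (y + 1))
                   - (\<Sum>\<alpha>\<le>m. coeff Q \<alpha> * r (x + \<alpha>) y) = 0)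
          \<and> (\<forall>x y. (x < m \<or> y = 0) \<longrightarrow> r x y = R x y)"
      using rec by simp
  next
    assume H: "(\<forall>x y. (\<Sum>\<alpha>\<le>m. coeff P \<alpha> * r (x + \<alpha>) (y + 1))
                   - (\<Sum>\<alpha>\<le>m. coeff Q \<alpha> * r (x + \<alpha>) y) = 0)
          \<and> (\<forall>x y. (x < m \<or> y = 0) \<longrightarrow> r x y = R x y)"
    have "\<forall>x. r x y = R x y" for y
    proof (induction y)
      case 0 then show ?case using H by simp
    next
      case (Suc y)
      have "r x (Suc y) = R x (Suc y)" for x
      proof (induction x rule: less_induct)
        case (less x)
        show ?case
        proof (cases "x < m")
          case True then show ?thesis using H by simp
        next
          case False
          define x0 where "x0 = x - m"
          have xx: "x = x0 + m" using False x0_def by simp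
          have lowr: "(\<Sum>\<alpha><m. coeff P \<alpha> * r (x0 + \<alpha>) (y + 1))
                = (\<Sum>\<alpha><m. coeff P \<alpha> * R (x0 + \<alpha>) (y + 1))"
            by (rule sum.cong) (use less xx in auto)
          have "(\<Sum>\<alpha>\<le>m. coeff P \<alpha> * r (x0 + \<alpha>) (y + 1))
              = (\<Sum>\<alpha>\<le>m. coeff Q \<alpha> * r (x0 + \<alpha>) y)" using H by auto
          also have "\<dots> = (\<Sum>\<alpha>\<le>m. coeff Q \<alpha> * R (x0 + \<alpha>) y)" using Suc by simp
          also have "\<dots> = (\<Sum>\<alpha>\<le>m. coeff P \<alpha> * R (x0 + \<alpha>) (y + 1))" using rec by simp
          finally have "coeff P m * r x (Suc y) = coeff P m * R x (Suc y)"
            unfolding split_top lowr xx by (simp add: add.commute)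
          then show ?thesis using assms(3) by simp
        qed
      qed
      then show ?case by simp
    qed
    then show "\<forall>x y. r x y = R x y" by simp
  qed
qed

end
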